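(* Let $0<p<1$ and let $\mu$ be a finite Borel measure on $S^{n-1}$ not concentrated in any closed hemisphere, and let $\mathfrak C_p(\mu)>0$ be a constant such that $\int_{S^{n-1}}(u\cdot v)_+^p\,d\mu(v)\ge\mathfrak C_p(\mu)$ for every $u\in S^{n-1}$. Let $\overline\mu_m$ be constructed as in the context. Then for all sufficiently large $m$, $$\int_{S^{n-1}}(u\cdot v)_+^p\,d\overline\mu_m(v)\ge\tfrac12\mathfrak C_p(\mu)\quad\text{for every }u\in S^{n-1}.$$
   Context: $(t)_+=\max\{t,0\}$; $|\nu|$ is total mass. Construction: for each positive integer $m$, $U_{1,m},\dots,U_{\mathcal N_m,m}$ is a partition of $S^{n-1}$ into Borel sets each of diameter less than $1/m$ and with nonempty interior relative to $S^{n-1}$, $v_{i,m}\in U_{i,m}$ are chosen in general position in dimension $n$, $\mu_m=\sum_{i=1}^{\mathcal N_m}(\mu(U_{i,m})+\mathcal N_m^{-2})\delta_{v_{i,m}}$ and $\overline\mu_m=\frac{|\mu|}{|\mu_m|}\mu_m$. *)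

theory Defs
  imports "HOL-Analysis.Analysis"
begin

definition pos_pow :: "real \<Rightarrow> real \<Rightarrow> real" where
  "pos_pow p t = (max t 0) powr p"

definition discrete_measure :: "nat \<Rightarrow> (nat \<Rightarrow> 'a::topological_space) \<Rightarrow> (nat \<Rightarrow> real) \<Rightarrow> 'a measure" where
  "discrete_measure N V w =
     measure_of UNIV (sets borel) (\<lambda>A. \<Sum>i<N. ennreal (w i) * indicator A (V i))"

definition general_position :: "(nat \<Rightarrow> 'a::euclidean_space) \<Rightarrow> nat set \<Rightarrow> bool" where
  "general_position V I \<longleftrightarrow>
     (\<forall>J. J \<subseteq> I \<and> card J \<le> DIM('a) \<longrightarrow> inj_on V J \<and> independent (V ` J))"

text \<open>A finite Borel measure on the unit sphere (as a measure on the ambient space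
  vanishing off the sphere).\<close>
definition finite_borel_measure_on_sphere :: "'a::euclidean_space measure \<Rightarrow> bool" where
  "finite_borel_measure_on_sphere \<mu> \<longleftrightarrow>
     sets \<mu> = sets borel \<and> finite_measure \<mu> \<and> emeasure \<mu> (- sphere 0 1) = 0"

text \<open>mu is concentrated in the closed hemisphere {v. u . v \<ge> 0} iff the complementary
  open hemisphere is null.\<close>
definition not_concentrated_in_hemisphere :: "'a::euclidean_space measure \<Rightarrow> bool" where
  "not_concentrated_in_hemisphere \<mu> \<longleftrightarrow>
     (\<forall>u\<in>sphere 0 1. emeasure \<mu> {v\<in>sphere 0 1. u \<bullet> v < 0} \<noteq> 0)"

end

theory Submission
  imports Defs
begin

lemma sets_discrete[simp, measurable_cong]: "sets (discrete_measure N V w) = sets borel"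
  by (simp add: discrete_measure_def) (metis space_borel sets.sigma_sets_eq)

lemma space_discrete[simp]: "space (discrete_measure N V w) = UNIV"
  by (simp add: discrete_measure_def)

lemma discrete_eq:
  fixes V :: "nat \<Rightarrow> 'a::topological_space"
  shows "discrete_measure N V w = distr (density (count_space {..<N}) (\<lambda>i. ennreal (w i))) borel V"
proof -
  let ?M = "distr (density (count_space {..<N}) (\<lambda>i. ennreal (w i))) borel V"
  have "?M = measure_of (space ?M) (sets ?M) (emeasure ?M)" by (rule measure_of_of_measure[symmetric])
  also have "\<dots> = measure_of UNIV (sets borel) (emeasure ?M)" by simp
  also have "\<dots> = discrete_measure N V w"
    unfolding discrete_measure_def
  proof (rule measure_of_eq)
    show "sets borel \<subseteq> Pow UNIV" by simp
    fix a :: "'a set" assume "a \<in> sigma_sets UNIV (sets borel)"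
    then have a: "a \<in> sets borel" by (metis space_borel sets.sigma_sets_eq)
    have "emeasure ?M a = emeasure (density (count_space {..<N}) (\<lambda>i. ennreal (w i))) (V -` a \<inter> {..<N})"
      using a by (subst emeasure_distr) auto
    also have "\<dots> = (\<integral>\<^sup>+ i. ennreal (w i) * indicator (V -` a \<inter> {..<N}) i \<partial>count_space {..<N})"
      by (subst emeasure_density) auto
    also have "\<dots> = (\<Sum>i<N. ennreal (w i) * indicator a (V i))"
      by (subst nn_integral_count_space_finite) (auto intro!: sum.cong simp: indicator_def)
    finally show "emeasure ?M a = (\<Sum>i<N. ennreal (w i) * indicator a (V i))" .
  qed
  finally show ?thesis by simp
qed

lemma nn_integral_discrete:
  assumes "f \<in> borel_measurable borel"
  shows "(\<integral>\<^sup>+x. f x \<partial>discrete_measure N V w) = (\<Sum>i<N. ennreal (w i) * f (V i))"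
  unfolding discrete_eq using assms
  by (subst nn_integral_distr) (auto simp: nn_integral_density nn_integral_count_space_finite)

lemma integral_discrete_scaled:
  fixes f :: "'a::euclidean_space \<Rightarrow> real"
  assumes f: "f \<in> borel_measurable borel" and fn: "\<And>x. f x \<ge> 0"
    and r: "r \<ge> 0" and w: "\<And>i. i < N \<Longrightarrow> w i \<ge> 0"
  shows "(\<integral>x. f x \<partial>scale_measure (ennreal r) (discrete_measure N V w)) = r * (\<Sum>i<N. w i * f (V i))"
proof -
  have m: "f \<in> borel_measurable (scale_measure (ennreal r) (discrete_measure N V w))"
    using f by (simp add: measurable_cong_sets[OF sets_scale_measure refl] measurable_cong_sets[OF sets_discrete refl])
  have "(\<integral>x. f x \<partial>scale_measure (ennreal r) (discrete_measure N V w))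
     = enn2real (ennreal r * (\<Sum>i<N. ennreal (w i) * ennreal (f (V i))))"
  proof -
    have fm: "(\<lambda>x. ennreal (f x)) \<in> borel_measurable (discrete_measure N V w)"
      using f by (simp add: measurable_cong_sets[OF sets_discrete refl])
    have fm2: "(\<lambda>x. ennreal (f x)) \<in> borel_measurable borel" using f by simp
    show ?thesis
      using fn by (subst integral_eq_nn_integral[OF m]) (auto simp: nn_integral_scale_measure[OF fm] nn_integral_discrete[OF fm2])
  qed
  also have "(\<Sum>i<N. ennreal (w i) * ennreal (f (V i))) = ennreal (\<Sum>i<N. w i * f (V i))"
    using w fn by (subst sum_ennreal[symmetric]) (auto simp: ennreal_mult' intro!: sum.cong)
  moreover have "(\<Sum>i<N. w i * f (V i)) \<ge> 0" using w fn by (intro sum_nonneg) auto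
  ultimately show ?thesis using r
    by (simp add: ennreal_mult'[symmetric])
qed

lemma pos_pow_nonneg: "pos_pow p t \<ge> 0"
  by (simp add: pos_pow_def)

lemma pos_pow_le1: "t \<le> 1 \<Longrightarrow> 0 < p \<Longrightarrow> pos_pow p t \<le> 1"
  unfolding pos_pow_def by (intro powr_le1) auto

lemma powr_ge_self: "0 \<le> (x::real) \<Longrightarrow> x \<le> 1 \<Longrightarrow> 0 < (p::real) \<Longrightarrow> p \<le> 1 \<Longrightarrow> x \<le> x powr p"
  using powr_mono'[of p 1 x] by (cases "x = 0") auto

lemma pos_pow_ge: "t \<le> 1 \<Longrightarrow> 0 < p \<Longrightarrow> p \<le> 1 \<Longrightarrow> t \<le> pos_pow p t"
  unfolding pos_pow_def using powr_ge_self[of t p] by (cases "t \<le> 0") auto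

lemma powr_subadd:
  fixes a b p :: real
  assumes "0 \<le> a" "0 \<le> b" "0 < p" "p \<le> 1"
  shows "(a + b) powr p \<le> a powr p + b powr p"
proof (cases "a + b = 0")
  case True then show ?thesis using assms by simp
next
  case False
  then have s: "a + b > 0" using assms by simp
  have "a powr p = (a + b) powr p * (a/(a+b)) powr p"
    using s assms by (simp add: powr_divide)
  moreover have "b powr p = (a + b) powr p * (b/(a+b)) powr p"
    using s assms by (simp add: powr_divide)
  moreover have "(a/(a+b)) \<le> (a/(a+b)) powr p"
    using s assms by (intro powr_ge_self) auto
  moreover have "(b/(a+b)) \<le> (b/(a+b)) powr p"
    using s assms by (intro powr_ge_self) auto
  moreover have "(a+b) powr p * (a/(a+b)) + (a+b) powr p * (b/(a+b)) = (a+b) powr p"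
  proof -
    have "(a+b) powr p * (a/(a+b)) + (a+b) powr p * (b/(a+b)) = (a+b) powr p * ((a+b)/(a+b))"
      by (simp only: distrib_left[symmetric] add_divide_distrib)
    then show ?thesis using s by simp
  qed
  ultimately show ?thesis
    by (smt (verit, ccfv_SIG) mult_left_mono powr_ge_zero)
qed

lemma pos_pow_holder:
  assumes "0 < p" "p \<le> 1"
  shows "pos_pow p x \<le> pos_pow p y + \<bar>x - y\<bar> powr p"
proof -
  have "max x 0 \<le> max y 0 + \<bar>x - y\<bar>" by auto
  then have "max x 0 powr p \<le> (max y 0 + \<bar>x - y\<bar>) powr p"
    using assms by (intro powr_mono2) auto
  also have "\<dots> \<le> max y 0 powr p + \<bar>x - y\<bar> powr p"
    using assms by (intro powr_subadd) auto
  finally show ?thesis by (simp add: pos_pow_def)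
qed

lemma cover_count:
  fixes U :: "nat \<Rightarrow> 'a::euclidean_space set" and v :: "nat \<Rightarrow> 'a"
  assumes cover: "(\<Union>i<N. U i) = sphere 0 1"
    and diam: "\<forall>i<N. diameter (U i) < 1 / real m"
    and disj: "\<forall>i<N. \<forall>j<N. i \<noteq> j \<longrightarrow> U i \<inter> U j = {}"
    and vin: "\<forall>i<N. v i \<in> U i" and m: "m \<ge> 1"
  shows "N \<le> 2 \<or> 2*m \<le> N"
proof (cases "DIM('a) = 1")
  case True
  then obtain b where B: "(Basis::'a set) = {b}" using card_1_singletonE by blast
  have b: "norm b = 1" using B by (metis insertI1 norm_Basis)
  have rep: "w = (w \<bullet> b) *\<^sub>R b" for w :: 'a
  proof -
    have "(\<Sum>b'\<in>Basis. (w \<bullet> b') *\<^sub>R b') = w" by (rule euclidean_representation)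
    then show ?thesis unfolding B by simp
  qed
  have sph: "sphere (0::'a) 1 \<subseteq> {b, -b}"
  proof
    fix w :: 'a assume "w \<in> sphere 0 1"
    then have "norm w = 1" by simp
    moreover have "norm ((w \<bullet> b) *\<^sub>R b) = \<bar>w \<bullet> b\<bar>" using b by simp
    ultimately have "\<bar>w \<bullet> b\<bar> = 1" using rep[of w] by simp
    then have "w \<bullet> b = 1 \<or> w \<bullet> b = -1" by auto
    then show "w \<in> {b, -b}" using rep[of w] by auto
  qed
  have inj: "inj_on v {..<N}"
  proof (rule inj_onI)
    fix i j assume "i \<in> {..<N}" "j \<in> {..<N}" "v i = v j"
    then have "i < N" "j < N" "v i = v j" by auto
    then show "i = j"
    proof (cases "i = j")
      case False
      then have "U i \<inter> U j = {}" using disj \<open>i<N\<close> \<open>j<N\<close> by simp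
      moreover have "v i \<in> U i" "v i \<in> U j" using vin \<open>i<N\<close> \<open>j<N\<close> \<open>v i = v j\<close> by auto
      ultimately show ?thesis by auto
    qed
  qed
  have vs: "v i \<in> sphere 0 1" if "i < N" for i
  proof -
    have "v i \<in> (\<Union>i<N. U i)" using vin that by blast
    then show ?thesis using cover by simp
  qed
  have "v ` {..<N} \<subseteq> {b, -b}" using vs sph by (meson image_subsetI lessThan_iff subset_iff)
  then have "card {..<N} \<le> card {b, -b}" using inj by (intro card_inj_on_le) auto
  also have "\<dots> \<le> 2" by (simp add: card_insert_le_m1)
  finally show ?thesis by simp
next
  case False
  have "DIM('a) \<ge> 2" using False DIM_positive[where 'a='a] by linarith
  obtain b1 :: 'a where b1: "b1 \<in> Basis" using nonempty_Basis by blast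
  have "Basis - {b1} \<noteq> {}"
  proof
    assume "Basis - {b1} = {}"
    then have "(Basis::'a set) \<subseteq> {b1}" by blast
    then have "card (Basis::'a set) \<le> 1" using card_mono[of "{b1}" "Basis::'a set"] by simp
    then show False using \<open>DIM('a) \<ge> 2\<close> by simp
  qed
  then obtain b2 where "b2 \<in> Basis - {b1}" by blast
  then have b12: "b1 \<in> Basis" "b2 \<in> Basis" "b1 \<noteq> b2" using b1 by auto
  define t where "t k = -1 + real k / real m" for k
  define z where "z k = t k *\<^sub>R b1 + sqrt (1 - (t k)\<^sup>2) *\<^sub>R b2" for k
  have tb: "\<bar>t k\<bar> \<le> 1" if "k \<le> 2*m" for k
  proof -
    have "real k \<le> 2 * real m" using that by linarith
    then have "real k / real m \<le> 2" using m by (simp add: divide_le_eq)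
    moreover have "real k / real m \<ge> 0" by simp
    ultimately show ?thesis unfolding t_def abs_le_iff by linarith
  qed
  have zs: "z k \<in> sphere 0 1" if "k \<le> 2*m" for k
  proof -
    have "(t k)\<^sup>2 \<le> 1" using tb[OF that] by (simp add: abs_square_le_1)
    then have "z k \<bullet> z k = 1"
      using b12 by (simp add: z_def inner_add_left inner_add_right inner_Basis power2_eq_square)
    then show ?thesis by (simp add: norm_eq_1)
  qed
  have "\<exists>i<N. z k \<in> U i" if "k \<le> 2*m" for k using zs[OF that] cover by blast
  then obtain g where g: "\<And>k. k \<le> 2*m \<Longrightarrow> g k < N \<and> z k \<in> U (g k)" by metis
  have inj: "inj_on g {..2*m}"
  proof (rule inj_onI)
    fix k j assume k: "k \<in> {..2*m}" and j: "j \<in> {..2*m}" and e: "g k = g j"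
    show "k = j"
    proof (rule ccontr)
      assume ne: "k \<noteq> j"
      have "U (g k) \<subseteq> (\<Union>i<N. U i)" using g[of k] k by auto
      then have bd: "bounded (U (g k))" using cover bounded_sphere bounded_subset by metis
      have "dist (z k) (z j) \<le> diameter (U (g k))"
        using g[of k] g[of j] k j e by (intro diameter_bounded_bound[OF bd]) auto
      also have "\<dots> < 1 / real m" using diam g[of k] k by auto
      finally have lt: "dist (z k) (z j) < 1 / real m" .
      have "\<bar>(z k - z j) \<bullet> b1\<bar> \<le> norm (z k - z j)" using b12 by (intro Basis_le_norm) auto
      moreover have "(z k - z j) \<bullet> b1 = t k - t j"
        using b12 by (simp add: z_def inner_diff_left inner_add_left inner_Basis)
      moreover have "\<bar>t k - t j\<bar> \<ge> 1 / real m"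
      proof -
        have "\<bar>t k - t j\<bar> = \<bar>real k - real j\<bar> / real m" using m
          by (simp add: t_def diff_divide_distrib[symmetric])
        moreover have "\<bar>real k - real j\<bar> \<ge> 1" using ne by linarith
        ultimately show ?thesis using m by (simp add: divide_right_mono)
      qed
      ultimately show False using lt by (simp add: dist_norm)
    qed
  qed
  have "g ` {..2*m} \<subseteq> {..<N}" using g by auto
  then have "card {..2*m} \<le> card {..<N}" using inj by (intro card_inj_on_le) auto
  then show ?thesis by simp
qed

lemma final_ineq:
  fixes s C T e A B mm :: real and n :: nat
  assumes "s > 0" "C > 0" "C \<le> s" "0 \<le> T" "T \<le> s" "e \<ge> 0" "e * s \<le> C/4" "mm \<ge> 1"
    "1/mm \<le> C/2" "1/s \<le> mm" "A \<ge> C - e * T" "B \<ge> 1 - 1/mm" "B \<ge> 0" "n \<ge> 1"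
    "real n \<le> 2 \<or> 2 * mm \<le> real n"
  shows "s / (T + 1 / real n) * (A + B / (real n)\<^sup>2) \<ge> C / 2"
proof -
  have n0: "real n > 0" using assms by simp
  have X: "T + 1 / real n > 0" using assms n0 by (simp add: add_nonneg_pos)
  have eT: "e * T \<le> e * s" using assms by (simp add: mult_left_mono)
  have main: "2 * s * (A + B / (real n)\<^sup>2) \<ge> C * (T + 1 / real n)"
  proof (cases "real n \<le> 2")
    case True
    have mC: "C - 2 * (e * s) \<ge> 1 / mm" using assms by linarith
    have "2 * s * A \<ge> 2 * s * C - 2 * s * (e * s)"
    proof -
      have "A \<ge> C - e * s" using assms eT by linarith
      then have "(2 * s) * A \<ge> (2 * s) * (C - e * s)" using assms by (intro mult_left_mono) auto
      then show ?thesis by (simp add: algebra_simps)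
    qed
    moreover have "s * (1 / mm) + 2 * s * B / (real n)\<^sup>2 \<ge> s / real n"
    proof -
      have "1 / mm + 2 * B / (real n)\<^sup>2 \<ge> 1 / real n"
      proof (cases "n = 1")
        case True then show ?thesis using assms by simp
      next
        case False
        then have "n = 2" using True assms by linarith
        then have "1 / mm + 2 * B / (real n)\<^sup>2 = 1/mm + B/2" "1 / real n = 1/2" by simp_all
        moreover have "1/mm > 0" using assms by simp
        ultimately show ?thesis using assms by linarith
      qed
      then have "s * (1 / mm + 2 * B / (real n)\<^sup>2) \<ge> s * (1 / real n)"
        using assms by (intro mult_left_mono) auto
      then show ?thesis by (simp add: algebra_simps)
    qed
    moreover have "C * T \<le> C * s" using assms by (simp add: mult_left_mono)
    moreover have "C / real n \<le> s / real n" using assms n0 by (simp add: divide_right_mono)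
    moreover have "s * (C - 2 * (e * s)) \<ge> s * (1 / mm)" using mC assms by (intro mult_left_mono) auto
    ultimately show ?thesis by (simp add: algebra_simps add_divide_distrib) 
  next
    case False
    then have n2: "2 * mm \<le> real n" using assms by simp
    have "s * real n \<ge> 2"
    proof -
      have "s * mm \<ge> 1" using assms by (simp add: divide_le_eq mult.commute)
      moreover have "s * real n \<ge> s * (2 * mm)" using n2 assms by (intro mult_left_mono) auto
      ultimately show ?thesis by linarith
    qed
    then have "1 / real n \<le> s / 2" using n0 by (simp add: divide_le_eq mult.commute)
    then have "C * (1 / real n) \<le> C * (s / 2)" using assms by (intro mult_left_mono) auto
    then have a1: "C * (1 / real n) \<le> (s * C) / 2" by (simp add: mult.commute)
    have "A \<ge> C - e * s" using assms eT by linarith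
    then have "s * A \<ge> s * (C - e * s)" using assms by (intro mult_left_mono) auto
    then have a2: "s * A \<ge> s * C - s * (e * s)" by (simp add: algebra_simps)
    have "s * (e * s) \<le> s * (C / 4)" using assms by (intro mult_left_mono) auto
    then have a3: "s * (e * s) \<le> (s * C) / 4" by simp
    have a4: "C * T \<le> s * C" using assms by (simp add: mult_left_mono mult.commute)
    have a5: "s * (B / (real n)\<^sup>2) \<ge> 0" using assms by simp
    have e1: "C * (T + 1 / real n) = C * T + C * (1 / real n)" by (simp add: distrib_left)
    have e2: "2 * s * (A + B / (real n)\<^sup>2) = 2 * (s * A) + 2 * (s * (B / (real n)\<^sup>2))"
      by (simp add: algebra_simps)
    show ?thesis unfolding e1 e2 using a1 a2 a3 a4 a5 by linarith
  qed
  show ?thesis using main X by (simp add: field_simps)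
qed

theorem lemma5p5:
  fixes \<mu> :: "'a::euclidean_space measure"
    and p C :: real
    and N :: "nat \<Rightarrow> nat"
    and U :: "nat \<Rightarrow> nat \<Rightarrow> 'a set"
    and v :: "nat \<Rightarrow> nat \<Rightarrow> 'a"
  assumes p: "0 < p" "p < 1"
    and mu: "finite_borel_measure_on_sphere \<mu>"
    and nc: "not_concentrated_in_hemisphere \<mu>"
    and C_pos: "C > 0"
    and C_bound: "\<forall>u\<in>sphere 0 1. (\<integral>w. pos_pow p (u \<bullet> w) \<partial>\<mu>) \<ge> C"
    and part_borel: "\<forall>m\<ge>1. \<forall>i<N m. U m i \<in> sets borel"
    and part_disj: "\<forall>m\<ge>1. \<forall>i<N m. \<forall>j<N m. i \<noteq> j \<longrightarrow> U m i \<inter> U m j = {}"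
    and part_cover: "\<forall>m\<ge>1. (\<Union>i<N m. U m i) = sphere 0 1"
    and part_diam: "\<forall>m\<ge>1. \<forall>i<N m. diameter (U m i) < 1 / real m"
    and part_int: "\<forall>m\<ge>1. \<forall>i<N m. (top_of_set (sphere 0 1)) interior_of (U m i) \<noteq> {}"
    and v_in: "\<forall>m\<ge>1. \<forall>i<N m. v m i \<in> U m i"
    and v_gp: "\<forall>m\<ge>1. general_position (v m) {..<N m}"
  shows "\<forall>\<^sub>F m in sequentially.
           \<forall>u\<in>sphere 0 1.
             (\<integral>w. pos_pow p (u \<bullet> w)
                \<partial>(scale_measure
                    (ennreal (measure \<mu> UNIV /
                       (\<Sum>i<N m. measure \<mu> (U m i) + 1 / (real (N m))\<^sup>2)))
                    (discrete_measure (N m) (v m)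
                       (\<lambda>i. measure \<mu> (U m i) + 1 / (real (N m))\<^sup>2))))
             \<ge> C / 2"
proof -
  define S where "S = sphere (0::'a) 1"
  define s where "s = measure \<mu> UNIV"
  from mu have sets_mu: "sets \<mu> = sets borel" and fin: "finite_measure \<mu>"
    and null: "emeasure \<mu> (- S) = 0"
    by (auto simp: finite_borel_measure_on_sphere_def S_def)
  interpret finite_measure \<mu> by (rule fin)
  have space_mu: "space \<mu> = UNIV" using sets_eq_imp_space_eq[OF sets_mu] by simp
  have fmeas: "(\<lambda>w. pos_pow p (u \<bullet> w)) \<in> borel_measurable borel" for u :: 'a
    unfolding pos_pow_def by measurable
  have fmeas_mu: "(\<lambda>w. pos_pow p (u \<bullet> w)) \<in> borel_measurable \<mu>" for u :: 'a
    by (subst measurable_cong_sets[OF sets_mu refl]) (rule fmeas)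
  have AE_S: "AE w in \<mu>. w \<in> S"
  proof (rule AE_I')
    show "- S \<in> null_sets \<mu>" using null sets_mu by (simp add: S_def null_sets_def)
  qed auto
  have inner_le: "u \<bullet> w \<le> 1" if "u \<in> S" "w \<in> S" for u w :: 'a
    using that norm_cauchy_schwarz[of u w] by (simp add: S_def)
  have fle1: "pos_pow p (u \<bullet> w) \<le> 1" if "u \<in> S" "w \<in> S" for u w :: 'a
    using pos_pow_le1[OF inner_le[OF that] p(1)] .
  have int_f: "integrable \<mu> (\<lambda>w. pos_pow p (u \<bullet> w))" if "u \<in> S" for u :: 'a
  proof (rule integrable_const_bound[where B=1])
    show "AE x in \<mu>. norm (pos_pow p (u \<bullet> x)) \<le> 1"
      using AE_S by eventually_elim (use fle1 that pos_pow_nonneg in auto)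
  qed (rule fmeas_mu)
  obtain u0 :: 'a where u0: "u0 \<in> S"
  proof -
    obtain b :: 'a where "b \<in> Basis" using nonempty_Basis by blast
    then show ?thesis using that[of b] by (simp add: S_def)
  qed
  have Cs: "C \<le> s"
  proof -
    have "C \<le> (\<integral>w. pos_pow p (u0 \<bullet> w) \<partial>\<mu>)" using C_bound u0 by (simp add: S_def)
    also have "\<dots> \<le> (\<integral>w. 1 \<partial>\<mu>)"
      using AE_S by (intro integral_mono_AE int_f[OF u0]) (auto elim!: eventually_mono intro: fle1[OF u0])
    also have "\<dots> = s" by (simp add: s_def space_mu)
    finally show ?thesis .
  qed
  have s_pos: "s > 0" using Cs C_pos by simp
  define eps where "eps m = real m powr (-p)" for m :: nat
  have key: "\<forall>u\<in>sphere 0 1.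
             (\<integral>w. pos_pow p (u \<bullet> w)
                \<partial>(scale_measure
                    (ennreal (measure \<mu> UNIV /
                       (\<Sum>i<N m. measure \<mu> (U m i) + 1 / (real (N m))\<^sup>2)))
                    (discrete_measure (N m) (v m)
                       (\<lambda>i. measure \<mu> (U m i) + 1 / (real (N m))\<^sup>2))))
             \<ge> C / 2"
    if m1: "m \<ge> 1" and e1: "eps m * s \<le> C/4" and e2: "1 / real m \<le> C/2" and e3: "1/s \<le> real m"
    for m
  proof -
    define n where "n = N m"
    define T where "T = (\<Sum>i<n. measure \<mu> (U m i))"
    define w where "w = (\<lambda>i. measure \<mu> (U m i) + 1 / (real n)\<^sup>2)"
    have cov: "(\<Union>i<n. U m i) = S" using part_cover m1 by (simp add: S_def n_def)
    have disj: "\<forall>i<n. \<forall>j<n. i \<noteq> j \<longrightarrow> U m i \<inter> U m j = {}" using part_disj m1 by (simp add: n_def)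
    have vin: "\<forall>i<n. v m i \<in> U m i" using v_in m1 by (simp add: n_def)
    have diam: "\<forall>i<n. diameter (U m i) < 1 / real m" using part_diam m1 by (simp add: n_def)
    have Usub: "U m i \<subseteq> S" if "i < n" for i using cov that by blast
    have Umeas: "U m i \<in> sets \<mu>" if "i < n" for i using part_borel m1 that sets_mu by (simp add: n_def)
    have dU: "dist x y < 1 / real m" if "i < n" "x \<in> U m i" "y \<in> U m i" for i x y
    proof -
      have "bounded (U m i)" using Usub[OF that(1)] by (metis S_def bounded_sphere bounded_subset)
      then have "dist x y \<le> diameter (U m i)" using that by (intro diameter_bounded_bound) auto
      then show ?thesis using diam that by force
    qed
    have vS: "v m i \<in> S" if "i < n" for i using vin Usub that by blast
    have n1: "n \<ge> 1"
    proof -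
      have "u0 \<in> (\<Union>i<n. U m i)" using cov u0 by simp
      then show ?thesis by auto
    qed
    have cnt: "real n \<le> 2 \<or> 2 * real m \<le> real n"
    proof -
      have "n \<le> 2 \<or> 2 * m \<le> n"
        by (rule cover_count[where N=n and U="U m" and m=m and v="v m"]) (use cov diam disj vin m1 in \<open>auto simp: S_def\<close>)
      then show ?thesis by linarith
    qed
    have T_le: "T \<le> s"
    proof -
      have "disjoint_family_on (U m) {..<n}" using disj by (auto simp: disjoint_family_on_def)
      then have "measure \<mu> (\<Union>i\<in>{..<n}. U m i) = T"
        unfolding T_def using Umeas by (intro finite_measure_finite_Union) auto
      moreover have "measure \<mu> (\<Union>i\<in>{..<n}. U m i) \<le> s"
        using bounded_measure space_mu by (simp add: s_def)
      ultimately show ?thesis by simp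
    qed
    have T_ge: "T \<ge> 0" unfolding T_def by (intro sum_nonneg) auto
    have sumw: "(\<Sum>i<n. w i) = T + 1 / real n"
    proof -
      have "(\<Sum>i<n. w i) = T + real n * (1 / (real n)\<^sup>2)"
        by (simp add: w_def T_def sum.distrib)
      also have "real n * (1 / (real n)\<^sup>2) = 1 / real n" using n1 by (simp add: power2_eq_square)
      finally show ?thesis .
    qed
    have eps_nn: "eps m \<ge> 0" by (simp add: eps_def)
    have "(\<integral>x. pos_pow p (u \<bullet> x) \<partial>scale_measure (ennreal (s / (\<Sum>i<n. w i))) (discrete_measure n (v m) w)) \<ge> C / 2"
      if u: "u \<in> sphere 0 1" for u
    proof -
      have uS: "u \<in> S" using u by (simp add: S_def)
      define F where "F i = pos_pow p (u \<bullet> v m i)" for i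
      define A where "A = (\<Sum>i<n. measure \<mu> (U m i) * F i)"
      define B where "B = (\<Sum>i<n. F i)"
      have F_nn: "F i \<ge> 0" for i by (simp add: F_def pos_pow_nonneg)
      have I: "(\<integral>x. pos_pow p (u \<bullet> x) \<partial>scale_measure (ennreal (s / (\<Sum>i<n. w i))) (discrete_measure n (v m) w))
          = s / (\<Sum>i<n. w i) * (\<Sum>i<n. w i * F i)"
        unfolding F_def
        by (rule integral_discrete_scaled[OF fmeas pos_pow_nonneg])
           (use s_pos T_ge sumw n1 in \<open>auto simp: w_def\<close>)
      have sum_eq: "(\<Sum>i<n. w i * F i) = A + B / (real n)\<^sup>2"
        by (simp add: w_def A_def B_def algebra_simps sum.distrib sum_divide_distrib)
      have A_ge: "A \<ge> C - eps m * T"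
      proof -
        have nu: "norm u = 1" using uS by (simp add: S_def)
        have pw: "AE x in \<mu>. pos_pow p (u \<bullet> x) \<le> (\<Sum>i<n. (F i + eps m) * indicator (U m i) x)"
          using AE_S
        proof eventually_elim
          case (elim x)
          then obtain j where j: "j < n" "x \<in> U m j" using cov by blast
          have "\<bar>u \<bullet> x - u \<bullet> v m j\<bar> = \<bar>u \<bullet> (x - v m j)\<bar>" by (simp add: inner_diff_right)
          also have "\<dots> \<le> norm u * norm (x - v m j)" by (rule Cauchy_Schwarz_ineq2)
          also have "\<dots> = dist x (v m j)" using nu by (simp add: dist_norm)
          also have "\<dots> < 1 / real m" using dU[OF j(1) j(2)] vin j(1) by blast
          finally have d: "\<bar>u \<bullet> x - u \<bullet> v m j\<bar> < 1 / real m" .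
          have "\<bar>u \<bullet> x - u \<bullet> v m j\<bar> powr p \<le> (1 / real m) powr p"
            using d p by (intro powr_mono2) auto
          also have "(1 / real m) powr p = eps m" by (simp add: eps_def powr_minus_divide powr_divide)
          finally have h: "\<bar>u \<bullet> x - u \<bullet> v m j\<bar> powr p \<le> eps m" .
          have "pos_pow p (u \<bullet> x) \<le> F j + \<bar>u \<bullet> x - u \<bullet> v m j\<bar> powr p"
            unfolding F_def using p by (intro pos_pow_holder) auto
          also have "\<dots> \<le> (F j + eps m) * indicator (U m j) x" using h j by simp
          also have "\<dots> \<le> (\<Sum>i<n. (F i + eps m) * indicator (U m i) x)"
            using j F_nn eps_nn by (intro member_le_sum) auto
          finally show ?case .
        qed
        have int_rhs: "integrable \<mu> (\<lambda>x. \<Sum>i<n. (F i + eps m) * indicator (U m i) x)"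
          using Umeas by (intro Bochner_Integration.integrable_sum[where f="\<lambda>i x. (F i + eps m) * indicator (U m i) x"]) (auto simp: less_top[symmetric])
        have "(\<integral>x. (\<Sum>i<n. (F i + eps m) * indicator (U m i) x) \<partial>\<mu>)
            = (\<Sum>i<n. (F i + eps m) * measure \<mu> (U m i))"
          using Umeas
          by (subst Bochner_Integration.integral_sum) (auto simp: less_top[symmetric] space_mu)
        also have "\<dots> = A + eps m * T"
          by (simp add: A_def T_def algebra_simps sum.distrib sum_distrib_left)
        finally have ie: "(\<integral>x. (\<Sum>i<n. (F i + eps m) * indicator (U m i) x) \<partial>\<mu>) = A + eps m * T" .
        have "C \<le> (\<integral>x. pos_pow p (u \<bullet> x) \<partial>\<mu>)" using C_bound u by simp
        also have "\<dots> \<le> (\<integral>x. (\<Sum>i<n. (F i + eps m) * indicator (U m i) x) \<partial>\<mu>)"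
          by (rule integral_mono_AE[OF int_f[OF uS] int_rhs pw])
        finally show ?thesis using ie by simp
      qed
      have B_ge: "B \<ge> 1 - 1 / real m"
      proof -
        have "u \<in> (\<Union>i<n. U m i)" using cov uS by simp
        then obtain j where j: "j < n" "u \<in> U m j" by blast
        have vj: "v m j \<in> S" using vS[OF j(1)] .
        have nu: "u \<bullet> u = 1" "v m j \<bullet> v m j = 1" using uS vj by (simp_all add: S_def norm_eq_1[symmetric])
        have d: "dist u (v m j) < 1 / real m" using dU[OF j(1) j(2)] vin j(1) by blast
        have "1 / real m \<le> 1" using m1 by simp
        have sq: "(norm (u - v m j))\<^sup>2 = 2 - 2 * (u \<bullet> v m j)"
          using nu by (simp add: power2_norm_eq_inner inner_diff_left inner_diff_right inner_commute)
        have "(norm (u - v m j))\<^sup>2 \<le> norm (u - v m j)"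
        proof -
          have "norm (u - v m j) \<le> 1" using d \<open>1 / real m \<le> 1\<close> by (simp add: dist_norm)
          then show ?thesis by (simp add: power2_eq_square mult_left_le)
        qed
        moreover have "1 / real m > 0" using m1 by simp
        ultimately have "u \<bullet> v m j \<ge> 1 - 1 / real m" using sq d unfolding dist_norm by linarith
        also have "u \<bullet> v m j \<le> F j"
          unfolding F_def using p by (intro pos_pow_ge inner_le[OF uS vj]) auto
        also have "F j \<le> B" unfolding B_def using j F_nn by (intro member_le_sum) auto
        finally show ?thesis .
      qed
      have B_nn: "B \<ge> 0" unfolding B_def by (intro sum_nonneg F_nn)
      have "s / (T + 1 / real n) * (A + B / (real n)\<^sup>2) \<ge> C / 2"
        by (rule final_ineq) (use s_pos C_pos Cs T_le T_ge eps_nn e1 e2 e3 m1 A_ge B_ge B_nn n1 cnt in auto)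
      then show ?thesis by (subst I) (simp only: sum_eq sumw)
    qed
    then show ?thesis unfolding s_def w_def n_def by simp
  qed
  have ev1: "\<forall>\<^sub>F m in sequentially. eps m * s < C/4"
  proof -
    have "((\<lambda>m. eps m) \<longlongrightarrow> 0) sequentially"
      unfolding eps_def using p by (intro tendsto_neg_powr filterlim_real_sequentially) auto
    then have "((\<lambda>m. eps m * s) \<longlongrightarrow> 0 * s) sequentially" by (rule tendsto_mult_right)
    then show ?thesis using C_pos by (intro order_tendstoD(2)) auto
  qed
  define M where "M = nat \<lceil>2 / C + 1 / s\<rceil> + 1"
  have ev2: "\<forall>\<^sub>F m in sequentially. M \<le> m" by (rule eventually_ge_at_top)
  show ?thesis
    using ev1 ev2
  proof eventually_elim
    case (elim m)
    have mM: "real m \<ge> 2 / C + 1 / s + 1"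
    proof -
      have "real M \<ge> 2 / C + 1 / s + 1" unfolding M_def by linarith
      then show ?thesis using elim by linarith
    qed
    have pos1: "2 / C > 0" "1 / s > 0" using C_pos s_pos by auto
    have m1: "m \<ge> 1" using mM pos1 by linarith
    have "real m \<ge> 2 / C" using mM pos1 by linarith
    then have "1 / real m \<le> C / 2" using C_pos m1 by (simp add: field_simps)
    moreover have "1 / s \<le> real m" using mM pos1 by linarith
    ultimately show ?case using key[OF m1] elim by auto
  qed
qed

end
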